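(* Let $\sigma$ be a state with $q=ch(\sigma)\ge 1$, let $D\subseteq\mathcal U$ be a question, and let $\sigma_{yes},\sigma_{no}$ be the resulting states. If $|w_{q-1}(\sigma_{yes})-w_{q-1}(\sigma_{no})|\le 1$, then $ch(\sigma_{yes})\le q-1$ and $ch(\sigma_{no})\le q-1$.
   Context: Let $\mathcal U=\{0,\dots,2^m-1\}$. A state is a map $\sigma:\mathcal U\to\{0,1,2,3,4\}$ with type $(t_0,t_1,t_2,t_3)$, $t_i=|\sigma^{-1}(i)|$. For $q\ge0$ the $q$-th volume is $w_q(\sigma)=\sum_{j=0}^3 t_j\sum_{\ell=0}^{3-j}\binom{q}{\ell}$, and the character is $ch(\sigma)=\min\{q\ge 0: w_q(\sigma)\le 2^q\}$. For a question $D\subseteq\mathcal U$, $\sigma_{yes}(y)=\min\{\sigma(y)+[y\notin D],4\}$ and $\sigma_{no}(y)=\min\{\sigma(y)+[y\in D],4\}$. *)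

theory Defs
  imports Main
begin

definition universe :: "nat \<Rightarrow> nat set" where
  "universe m = {0..<2^m}"

definition is_state :: "nat \<Rightarrow> (nat \<Rightarrow> nat) \<Rightarrow> bool" where
  "is_state m \<sigma> \<longleftrightarrow> (\<forall>y \<in> universe m. \<sigma> y \<le> 4)"

definition tcount :: "nat \<Rightarrow> (nat \<Rightarrow> nat) \<Rightarrow> nat \<Rightarrow> nat" where
  "tcount m \<sigma> i = card {y \<in> universe m. \<sigma> y = i}"

definition volume :: "nat \<Rightarrow> (nat \<Rightarrow> nat) \<Rightarrow> nat \<Rightarrow> nat" where
  "volume m \<sigma> q = (\<Sum>j\<le>3. tcount m \<sigma> j * (\<Sum>l\<le>3 - j. q choose l))"

definition character :: "nat \<Rightarrow> (nat \<Rightarrow> nat) \<Rightarrow> nat" where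
  "character m \<sigma> = (LEAST q. volume m \<sigma> q \<le> 2^q)"

definition sigma_yes :: "(nat \<Rightarrow> nat) \<Rightarrow> nat set \<Rightarrow> nat \<Rightarrow> nat" where
  "sigma_yes \<sigma> D y = min (\<sigma> y + (if y \<notin> D then 1 else 0)) 4"

definition sigma_no :: "(nat \<Rightarrow> nat) \<Rightarrow> nat set \<Rightarrow> nat \<Rightarrow> nat" where
  "sigma_no \<sigma> D y = min (\<sigma> y + (if y \<in> D then 1 else 0)) 4"

end

theory Submission
  imports Defs
begin

definition fv :: "nat \<Rightarrow> nat \<Rightarrow> nat" where
  "fv j q = (if j \<le> 3 then (\<Sum>l\<le>3 - j. q choose l) else 0)"

lemma volume_alt: "volume m \<sigma> q = (\<Sum>y\<in>universe m. fv (\<sigma> y) q)"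
proof -
  have fin: "finite (universe m)" by (simp add: universe_def)
  have "(\<Sum>y\<in>universe m. fv (\<sigma> y) q)
      = (\<Sum>y\<in>universe m. \<Sum>j\<le>3. (if \<sigma> y = j then (\<Sum>l\<le>3 - j. q choose l) else 0))"
    by (rule sum.cong) (auto simp: fv_def if_distrib sum.delta cong: if_cong)
  also have "\<dots> = (\<Sum>j\<le>3. \<Sum>y\<in>universe m. (if \<sigma> y = j then (\<Sum>l\<le>3 - j. q choose l) else 0))"
    by (rule sum.swap)
  also have "\<dots> = volume m \<sigma> q"
    unfolding volume_def tcount_def
    by (rule sum.cong) (simp_all add: sum.If_cases[OF fin] Int_def)
  finally show ?thesis by simp
qed

lemma fv_min: "fv (min x 4) q = fv x q"
  by (simp add: fv_def min_def)

lemma fv_suc: "fv j (Suc p) = fv j p + fv (Suc j) p"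
proof -
  consider "j = 0" | "j = 1" | "j = 2" | "j = 3" | "j \<ge> 4" by linarith
  then show ?thesis
    by cases (simp_all add: fv_def numeral_eq_Suc atMost_Suc)
qed

lemma conservation:
  assumes "q = Suc p"
  shows "volume m (sigma_yes \<sigma> D) p + volume m (sigma_no \<sigma> D) p = volume m \<sigma> q"
  unfolding volume_alt sum.distrib[symmetric] assms
  by (rule sum.cong) (auto simp: sigma_yes_def sigma_no_def fv_min fv_suc)

lemma fv_bound: assumes "q \<ge> 1" shows "fv j q \<le> 4 * q^3"
proof -
  have b: "q choose l \<le> q^3" if "l \<le> 3" for l
  proof (cases "q = 0")
    case True then show ?thesis using \<open>q \<ge> 1\<close> by simp
  next
    case False
    have "q choose l \<le> q^l" by (cases "l \<le> q") (auto intro: binomial_le_pow simp: binomial_eq_0)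
    also have "\<dots> \<le> q^3" using False that by (simp add: power_increasing)
    finally show ?thesis .
  qed
  have "fv j q \<le> (\<Sum>l\<le>3. q choose l)"
    by (auto simp: fv_def intro!: sum_mono2)
  also have "\<dots> \<le> (\<Sum>l\<le>(3::nat). q^3)" by (rule sum_mono) (simp add: b)
  also have "\<dots> = 4 * q^3" by simp
  finally show ?thesis .
qed

lemma volume_bound: assumes "q \<ge> 1" shows "volume m \<sigma> q \<le> 2^m * (4 * q^3)"
proof -
  have "volume m \<sigma> q \<le> (\<Sum>y\<in>universe m. 4 * q^3)"
    unfolding volume_alt by (rule sum_mono) (rule fv_bound[OF assms])
  also have "\<dots> = 2^m * (4 * q^3)" by (simp add: universe_def)
  finally show ?thesis .
qed

lemma exists_q: "\<exists>q. volume m \<sigma> q \<le> 2^q"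
proof
  define k where "k = m + 5"
  define q :: nat where "q = 2^k"
  have "volume m \<sigma> q \<le> 2^m * (4 * q^3)" by (rule volume_bound) (simp add: q_def)
  also have "\<dots> = 2^(m + 2 + 3*k)" by (simp add: q_def power_add power_mult[symmetric] mult.commute)
  also have "\<dots> \<le> 2^q"
  proof (rule power_increasing)
    have "m + 1 < 2^(m+1)" by (rule less_exp)
    then have "16 * (m + 1) < 16 * 2^(m+1)" by simp
    then show "m + 2 + 3*k \<le> q" by (simp add: q_def k_def power_add)
  qed simp
  finally show "volume m \<sigma> q \<le> 2^q" .
qed

theorem lemma1:
  fixes m :: nat and \<sigma> :: "nat \<Rightarrow> nat" and D :: "nat set" and q :: nat
  assumes "is_state m \<sigma>"
    and "q = character m \<sigma>" and "q \<ge> 1"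
    and "D \<subseteq> universe m"
    and "\<bar>int (volume m (sigma_yes \<sigma> D) (q - 1)) - int (volume m (sigma_no \<sigma> D) (q - 1))\<bar> \<le> 1"
  shows "character m (sigma_yes \<sigma> D) \<le> q - 1 \<and> character m (sigma_no \<sigma> D) \<le> q - 1"
proof -
  obtain p where qp: "q = Suc p" using assms(3) by (cases q) auto
  have "volume m \<sigma> q \<le> 2 ^ q"
    unfolding assms(2) character_def by (rule LeastI_ex) (rule exists_q)
  moreover have c: "volume m (sigma_yes \<sigma> D) p + volume m (sigma_no \<sigma> D) p = volume m \<sigma> q"
    using conservation qp by blast
  ultimately have "volume m (sigma_yes \<sigma> D) p \<le> 2^p \<and> volume m (sigma_no \<sigma> D) p \<le> 2^p"
    using assms(5) qp by auto
  then show ?thesis unfolding qp character_def by (auto intro: Least_le)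
qed

end
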